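(* Let $G=(V,E)$ be a $\lambda$-expander graph, $l\ge1$ an integer, and $f:V\to\mathbb R_{\ge0}$ such that $\Pr_{v\sim U(V)}(f(v)\ge x)\le\exp(-x(\ln x)^3)$ for all real $x\ge 20$, and suppose $\lambda\le\exp(-l(\ln l)^3)$. Then \[ \Pr_{w\sim\mathrm{Walk}(G,l)}\Big(\textstyle\sum_{i\in[l]}f(w_i)\ge C\,l\Big)\le\exp(-l), \] where $C:=e^2+e^3+(e-1)$ (note $C\le 30$).
   Context: $[l]:=\{0,\dots,l-1\}$; $U(V)$ is the uniform distribution on $V$. Graphs are finite, undirected, may have parallel edges and self-loops; the adjacency matrix $A=(a_{uv})$ counts edges between $u$ and $v$; the graph is $d$-regular ($d\ge1$) if $A$ is symmetric with all row sums $d$; it is a $\lambda$-expander if it is $d$-regular and the second largest absolute value of the eigenvalues of $A$ (with multiplicity) is at most $d\lambda$. $\mathrm{Walk}(G,l)$ is the distribution of $w=(w_0,\dots,w_{l-1})$ where $w_0$ is uniform on $V$ and $w_{i+1}=u$ with probability $a_{w_iu}/d$ given the past. *)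

theory Defs
  imports "Jordan_Normal_Form.Char_Poly"
          "HOL-Computational_Algebra.Fundamental_Theorem_Algebra"
          "HOL-Probability.Probability_Mass_Function"
begin

text \<open>A finite (multi)graph on vertex set V = {0..<n}, given by its adjacency
  matrix a u v = number of edges between u and v (only entries with u, v < n matter).\<close>

definition adj_mat :: "nat \<Rightarrow> (nat \<Rightarrow> nat \<Rightarrow> nat) \<Rightarrow> complex Matrix.mat" where
  "adj_mat n a = Matrix.mat n n (\<lambda>(i, j). of_nat (a i j))"

definition regular_graph :: "nat \<Rightarrow> (nat \<Rightarrow> nat \<Rightarrow> nat) \<Rightarrow> nat \<Rightarrow> bool" where
  "regular_graph n a d \<longleftrightarrow> d \<ge> 1 \<and> (\<forall>u<n. \<forall>v<n. a u v = a v u)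
     \<and> (\<forall>u<n. (\<Sum>v<n. a u v) = d)"

definition eigenvalues_mset :: "complex Matrix.mat \<Rightarrow> complex multiset" where
  "eigenvalues_mset A = proots (char_poly A)"

text \<open>Second largest absolute value of the eigenvalues (with multiplicity) is at most d*lam:
  after removing one copy of the largest absolute value, all remaining ones are bounded
  (vacuous if there is only one eigenvalue).\<close>
definition expander :: "nat \<Rightarrow> (nat \<Rightarrow> nat \<Rightarrow> nat) \<Rightarrow> nat \<Rightarrow> real \<Rightarrow> bool" where
  "expander n a d lam \<longleftrightarrow> regular_graph n a d \<and>
     (let M = image_mset cmod (eigenvalues_mset (adj_mat n a))
      in \<forall>x \<in># M - {# Max_mset M #}. x \<le> real d * lam)"

definition walk_step :: "nat \<Rightarrow> (nat \<Rightarrow> nat \<Rightarrow> nat) \<Rightarrow> nat \<Rightarrow> nat \<Rightarrow> nat pmf" where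
  "walk_step n a d v = embed_pmf (\<lambda>u. if u < n then real (a v u) / real d else 0)"

text \<open>Walk(G,l): list [w_0,...,w_{l-1}], w_0 uniform on V (for l \<ge> 1).\<close>
fun walk_pmf :: "nat \<Rightarrow> (nat \<Rightarrow> nat \<Rightarrow> nat) \<Rightarrow> nat \<Rightarrow> nat \<Rightarrow> nat list pmf" where
  "walk_pmf n a d 0 = return_pmf []"
| "walk_pmf n a d (Suc 0) = map_pmf (\<lambda>v. [v]) (pmf_of_set {..<n})"
| "walk_pmf n a d (Suc (Suc k)) =
     bind_pmf (walk_pmf n a d (Suc k)) (\<lambda>w. map_pmf (\<lambda>u. w @ [u]) (walk_step n a d (last w)))"

end

theory Submission
  imports Defs "HOL-Analysis.L2_Norm" "HOL-Analysis.Convex" "Jordan_Normal_Form.Schur_Decomposition" "HOL-Analysis.Complex_Transcendental"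
begin
locale G =
  fixes n d :: nat and a :: "nat \<Rightarrow> nat \<Rightarrow> nat"
  assumes n_pos: "n > 0" and reg: "regular_graph n a d"
begin

lemma d_ge1: "d \<ge> 1" using reg unfolding regular_graph_def by auto
lemma d_pos: "real d > 0" using d_ge1 by simp
lemma sym: "u < n \<Longrightarrow> v < n \<Longrightarrow> a u v = a v u" using reg unfolding regular_graph_def by auto
lemma rowsum: "u < n \<Longrightarrow> (\<Sum>v<n. real (a u v)) = real d"
  using reg unfolding regular_graph_def by (metis of_nat_sum)
lemma colsum: "v < n \<Longrightarrow> (\<Sum>u<n. real (a u v)) = real d"
  using rowsum[of v] sym[of _ v] by (metis (no_types, lifting) lessThan_iff sum.cong)

lemma unif_set[simp]: "set_pmf (pmf_of_set {..<n}) = {..<n}"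
  using n_pos by (subst set_pmf_of_set) auto

definition P :: "nat \<Rightarrow> nat \<Rightarrow> real" where "P u v = real (a u v) / real d"

lemma P_nonneg: "P u v \<ge> 0" unfolding P_def by simp
lemma P_rowsum: "u < n \<Longrightarrow> (\<Sum>v<n. P u v) = 1"
  unfolding P_def using rowsum d_pos by (simp add: sum_divide_distrib[symmetric])
lemma P_colsum: "v < n \<Longrightarrow> (\<Sum>u<n. P u v) = 1"
  unfolding P_def using colsum d_pos by (simp add: sum_divide_distrib[symmetric])

lemma step_pmf: assumes "v < n"
  shows "pmf (walk_step n a d v) u = (if u < n then P v u else 0)"
proof -
  let ?f = "\<lambda>u. if u < n then real (a v u) / real d else 0"
  have nn: "\<And>x. 0 \<le> ?f x" by simp
  have "(\<integral>\<^sup>+x. ennreal (?f x) \<partial>count_space UNIV) = (\<Sum>x\<in>{..<n}. ennreal (?f x))"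
    by (rule nn_integral_count_space') auto
  also have "\<dots> = ennreal (\<Sum>x\<in>{..<n}. ?f x)" by (rule sum_ennreal) simp
  also have "(\<Sum>x\<in>{..<n}. ?f x) = 1" using P_rowsum[OF assms] unfolding P_def by simp
  finally have "(\<integral>\<^sup>+x. ennreal (?f x) \<partial>count_space UNIV) = 1" by simp
  then show ?thesis unfolding walk_step_def P_def
    by (subst pmf_embed_pmf[OF nn]) auto
qed

lemma step_set: assumes "v < n" shows "set_pmf (walk_step n a d v) \<subseteq> {..<n}"
  using step_pmf[OF assms] by (auto simp: set_pmf_eq)

definition W :: "nat \<Rightarrow> nat list set" where "W m = {w. set w \<subseteq> {..<n} \<and> length w = m}"

lemma W_finite: "finite (W m)" unfolding W_def by (rule finite_lists_length_eq) simp

lemma walk_supp_Suc: "set_pmf (walk_pmf n a d (Suc k)) \<subseteq> W (Suc k)"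
proof (induction k)
  case 0
  then show ?case using n_pos by (auto simp: W_def)
next
  case (Suc k)
  show ?case
  proof
    fix x assume "x \<in> set_pmf (walk_pmf n a d (Suc (Suc k)))"
    then obtain w u where w: "w \<in> set_pmf (walk_pmf n a d (Suc k))" and
      u: "u \<in> set_pmf (walk_step n a d (last w))" and x: "x = w @ [u]" by auto
    from w Suc have wW: "set w \<subseteq> {..<n}" "length w = Suc k" by (auto simp: W_def)
    then have "last w \<in> set w" by (metis last_in_set list.size(3) nat.distinct(1))
    then have "last w < n" using wW by auto
    then have "u < n" using step_set u by auto
    then show "x \<in> W (Suc (Suc k))" using wW x by (auto simp: W_def)
  qed
qed

lemma walk_supp: "set_pmf (walk_pmf n a d m) \<subseteq> W m"
  using walk_supp_Suc by (cases m) (auto simp: W_def)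

fun Phi :: "(nat \<Rightarrow> nat \<Rightarrow> real) \<Rightarrow> nat \<Rightarrow> nat \<Rightarrow> real" where
  "Phi h 0 v = 1"
| "Phi h (Suc 0) v = h 0 v"
| "Phi h (Suc (Suc k)) v = h (Suc k) v * (\<Sum>u<n. Phi h (Suc k) u * P u v)"

lemma walk_exp_base:
  fixes h :: "nat \<Rightarrow> nat \<Rightarrow> real" and g :: "nat \<Rightarrow> real"
  shows "measure_pmf.expectation (walk_pmf n a d (Suc 0)) (\<lambda>w. (\<Prod>i<Suc 0. h i (w!i)) * g (last w))
  = (\<Sum>v<n. h 0 v * g v) / real n"
proof -
  have t1: "walk_pmf n a d (Suc 0) = map_pmf (\<lambda>v. [v]) (pmf_of_set {..<n})" by simp
  have t2: "measure_pmf.expectation (walk_pmf n a d (Suc 0)) (\<lambda>w. (\<Prod>i<Suc 0. h i (w!i)) * g (last w))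
    = measure_pmf.expectation (pmf_of_set {..<n}) (\<lambda>v. (\<Prod>i<Suc 0. h i ([v]!i)) * g (last [v]))"
    unfolding t1 by (rule integral_map_pmf)
  have t3: "(\<lambda>v::nat. (\<Prod>i<Suc 0. h i ([v]!i)) * g (last [v])) = (\<lambda>x. h 0 x * g x)"
    by simp
  show ?thesis
    unfolding t2 t3 using n_pos by (subst integral_pmf_of_set) auto
qed

lemma walk_exp:
  "measure_pmf.expectation (walk_pmf n a d (Suc k)) (\<lambda>w. (\<Prod>i<Suc k. h i (w!i)) * g (last w))
   = (\<Sum>v<n. Phi h (Suc k) v * g v) / n"
proof (induction k arbitrary: g)
  case 0
  show ?case using walk_exp_base[of h g] by (simp only: Phi.simps)
next
  case (Suc k)
  let ?F = "\<lambda>w. (\<Prod>i<Suc (Suc k). h i (w!i)) * g (last w)"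
  define G where "G x = (\<Sum>u<n. P x u * h (Suc k) u * g u)" for x
  have lw: "last w < n" if "w \<in> W (Suc k)" for w
  proof -
    from that have "w \<noteq> []" unfolding W_def by auto
    then have "last w \<in> set w" by (rule last_in_set)
    then show ?thesis using that unfolding W_def by auto
  qed
  have "measure_pmf.expectation (walk_pmf n a d (Suc (Suc k))) ?F =
     (\<Sum>w\<in>W (Suc k). pmf (walk_pmf n a d (Suc k)) w *\<^sub>R
        measure_pmf.expectation (map_pmf (\<lambda>u. w @ [u]) (walk_step n a d (last w))) ?F)"
    unfolding walk_pmf.simps
    apply (rule pmf_expectation_bind)
    using W_finite walk_supp by (auto intro!: finite_imageI finite_subset[OF step_set[OF lw]])
  also have "\<dots> = (\<Sum>w\<in>W (Suc k). pmf (walk_pmf n a d (Suc k)) w *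
        ((\<Prod>i<Suc k. h i (w!i)) * G (last w)))"
  proof (rule sum.cong[OF refl])
    fix w assume w: "w \<in> W (Suc k)"
    have lenw: "length w = Suc k" using w unfolding W_def by auto
    have "measure_pmf.expectation (map_pmf (\<lambda>u. w @ [u]) (walk_step n a d (last w))) ?F
       = measure_pmf.expectation (walk_step n a d (last w)) (\<lambda>u. ?F (w @ [u]))" by (rule integral_map_pmf)
    also have "\<dots> = (\<Sum>u<n. ?F (w @ [u]) * pmf (walk_step n a d (last w)) u)"
      apply (rule integral_measure_pmf_real)
      using step_set[OF lw[OF w]] by auto
    also have "\<dots> = (\<Sum>u<n. (\<Prod>i<Suc k. h i (w!i)) * (P (last w) u * h (Suc k) u * g u))"
    proof (rule sum.cong[OF refl])
      fix u assume u: "u \<in> {..<n}"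
      have "(\<Prod>i<Suc (Suc k). h i ((w @ [u])!i)) = (\<Prod>i<Suc k. h i ((w @ [u])!i)) * h (Suc k) u"
        using lenw by (simp add: nth_append)
      also have "(\<Prod>i<Suc k. h i ((w @ [u])!i)) = (\<Prod>i<Suc k. h i (w!i))"
        using lenw by (intro prod.cong) (auto simp: nth_append)
      finally show "?F (w @ [u]) * pmf (walk_step n a d (last w)) u =
          (\<Prod>i<Suc k. h i (w!i)) * (P (last w) u * h (Suc k) u * g u)"
        using u step_pmf[OF lw[OF w]] by simp
    qed
    also have "\<dots> = (\<Prod>i<Suc k. h i (w!i)) * G (last w)"
      unfolding G_def by (simp add: sum_distrib_left)
    finally show "pmf (walk_pmf n a d (Suc k)) w *\<^sub>R
        measure_pmf.expectation (map_pmf (\<lambda>u. w @ [u]) (walk_step n a d (last w))) ?F =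
        pmf (walk_pmf n a d (Suc k)) w * ((\<Prod>i<Suc k. h i (w!i)) * G (last w))" by simp
  qed
  also have "\<dots> = measure_pmf.expectation (walk_pmf n a d (Suc k)) (\<lambda>w. (\<Prod>i<Suc k. h i (w!i)) * G (last w))"
    by (subst integral_measure_pmf_real[OF W_finite]) (use walk_supp in \<open>auto simp: mult.commute\<close>)
  also have "\<dots> = (\<Sum>v<n. Phi h (Suc k) v * G v) / n" by (rule Suc)
  also have "(\<Sum>v<n. Phi h (Suc k) v * G v) = (\<Sum>u<n. Phi h (Suc (Suc k)) u * g u)"
  proof -
    have "(\<Sum>v<n. Phi h (Suc k) v * G v) = (\<Sum>v<n. \<Sum>u<n. Phi h (Suc k) v * P v u * h (Suc k) u * g u)"
      unfolding G_def by (simp add: sum_distrib_left mult.assoc)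
    also have "\<dots> = (\<Sum>u<n. \<Sum>v<n. Phi h (Suc k) v * P v u * h (Suc k) u * g u)"
      by (rule sum.swap)
    also have "\<dots> = (\<Sum>u<n. Phi h (Suc (Suc k)) u * g u)"
      unfolding Phi.simps by (simp add: sum_distrib_left sum_distrib_right mult.commute mult.left_commute)
    finally show ?thesis .
  qed
  finally show ?case .
qed


end

context G begin

fun Apow :: "nat \<Rightarrow> nat \<Rightarrow> nat \<Rightarrow> real" where
  "Apow 0 u v = (if u = v then 1 else 0)"
| "Apow (Suc m) u v = (\<Sum>w<n. Apow m u w * real (a w v))"

lemma Apow_1: assumes "u < n" shows "Apow 1 u v = real (a u v)"
proof -
  have "Apow 1 u v = (\<Sum>w<n. Apow 0 u w * real (a w v))"
    using Apow.simps(2)[of 0 u v] by simp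
  also have "\<dots> = (\<Sum>w<n. if w = u then real (a u v) else 0)"
    by (rule sum.cong) auto
  then show ?thesis using assms by simp
qed

lemma Apow_nonneg: "Apow m u v \<ge> 0"
  by (induction m arbitrary: v) (auto intro!: sum_nonneg)

lemma Apow_add: "v < n \<Longrightarrow> Apow (j + m) u v = (\<Sum>w<n. Apow j u w * Apow m w v)"
proof (induction m arbitrary: v)
  case 0
  then show ?case by (simp add: if_distrib sum.delta cong: if_cong)
next
  case (Suc m)
  have "Apow (j + Suc m) u v = (\<Sum>x<n. Apow (j + m) u x * real (a x v))" by simp
  also have "\<dots> = (\<Sum>x<n. (\<Sum>w<n. Apow j u w * Apow m w x) * real (a x v))"
    using Suc.IH by (intro sum.cong) auto
  also have "\<dots> = (\<Sum>x<n. \<Sum>w<n. Apow j u w * (Apow m w x * real (a x v)))"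
    by (simp add: sum_distrib_right mult.assoc)
  also have "\<dots> = (\<Sum>w<n. \<Sum>x<n. Apow j u w * (Apow m w x * real (a x v)))"
    by (rule sum.swap)
  also have "\<dots> = (\<Sum>w<n. Apow j u w * Apow (Suc m) w v)"
    by (simp add: sum_distrib_left)
  finally show ?case .
qed

lemma Apow_Suc_left: "v < n \<Longrightarrow> Apow (Suc m) u v = (\<Sum>w<n. real (a u w) * Apow m w v)" if "u < n"
  using Apow_add[of v 1 m u] Apow_1[OF that] by simp

lemma Apow_sym: "u < n \<Longrightarrow> v < n \<Longrightarrow> Apow m u v = Apow m v u"
proof (induction m arbitrary: u v)
  case 0
  then show ?case by simp
next
  case (Suc m)
  have "Apow (Suc m) u v = (\<Sum>w<n. real (a u w) * Apow m w v)"
    using Suc.prems by (rule Apow_Suc_left)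
  also have "\<dots> = (\<Sum>w<n. Apow m v w * real (a w u))"
    using Suc sym by (intro sum.cong) (auto simp: mult.commute)
  also have "\<dots> = Apow (Suc m) v u" by simp
  finally show ?case .
qed

lemma Apow_rowsum: "u < n \<Longrightarrow> (\<Sum>v<n. Apow m u v) = real d ^ m"
proof (induction m)
  case 0
  then show ?case by (simp add: sum.delta cong: if_cong)
next
  case (Suc m)
  have "(\<Sum>v<n. Apow (Suc m) u v) = (\<Sum>v<n. \<Sum>w<n. Apow m u w * real (a w v))" by simp
  also have "\<dots> = (\<Sum>w<n. \<Sum>v<n. Apow m u w * real (a w v))" by (rule sum.swap)
  also have "\<dots> = (\<Sum>w<n. Apow m u w * real d)"
    using rowsum by (intro sum.cong) (auto simp: sum_distrib_left[symmetric])
  also have "\<dots> = real d ^ Suc m" using Suc by (simp add: sum_distrib_right[symmetric])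
  finally show ?case .
qed

lemma Apow_colsum: "v < n \<Longrightarrow> (\<Sum>u<n. Apow m u v) = real d ^ m"
proof -
  assume v: "v < n"
  have "(\<Sum>u<n. Apow m u v) = (\<Sum>u<n. Apow m v u)" using Apow_sym v by (intro sum.cong) auto
  then show ?thesis using Apow_rowsum[OF v] by simp
qed

definition Q :: "nat \<Rightarrow> nat \<Rightarrow> nat \<Rightarrow> real" where
  "Q m u v = Apow m u v / real d ^ m - 1 / real n"

lemma Q_sym: "u < n \<Longrightarrow> v < n \<Longrightarrow> Q m u v = Q m v u"
  unfolding Q_def using Apow_sym by simp

lemma Q_mult: assumes "u < n" "v < n"
  shows "(\<Sum>w<n. Q j u w * Q m w v) = Q (j + m) u v"
proof -
  have dn: "real d ^ j > 0" "real d ^ m > 0" "real n > 0" using d_pos n_pos by auto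
  have e: "Q j u w * Q m w v = Apow j u w * Apow m w v / (real d ^ j * real d ^ m)
     - Apow j u w / (real d ^ j * real n) - Apow m w v / (real d ^ m * real n) + 1 / (real n * real n)" for w
    unfolding Q_def using dn by (simp add: field_simps)
  have "(\<Sum>w<n. Q j u w * Q m w v) =
     (\<Sum>w<n. Apow j u w * Apow m w v) / (real d ^ j * real d ^ m)
     - (\<Sum>w<n. Apow j u w) / (real d ^ j * real n)
     - (\<Sum>w<n. Apow m w v) / (real d ^ m * real n) + real n * (1 / (real n * real n))"
    unfolding e by (simp add: sum.distrib sum_subtractf sum_divide_distrib)
  also have "\<dots> = Q (j + m) u v"
    unfolding Q_def Apow_add[OF assms(2), symmetric] Apow_rowsum[OF assms(1)] Apow_colsum[OF assms(2)]
    using dn d_ge1 by (simp add: field_simps power_add)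
  finally show ?thesis .
qed

lemma Q_sq_sum: "(\<Sum>u<n. \<Sum>v<n. (Q k u v)^2) = (\<Sum>u<n. Apow (2*k) u u) / real d ^ (2*k) - 1"
proof -
  have "(\<Sum>u<n. \<Sum>v<n. (Q k u v)^2) = (\<Sum>u<n. \<Sum>v<n. Q k u v * Q k v u)"
    using Q_sym by (intro sum.cong) (auto simp: power2_eq_square)
  also have "\<dots> = (\<Sum>u<n. Q (2*k) u u)"
    using Q_mult by (intro sum.cong) (auto simp: mult_2)
  also have "\<dots> = (\<Sum>u<n. Apow (2*k) u u) / real d ^ (2*k) - 1"
    unfolding Q_def using n_pos by (simp add: sum_subtractf sum_divide_distrib)
  finally show ?thesis .
qed

definition Ek :: "nat \<Rightarrow> (nat \<Rightarrow> real) \<Rightarrow> nat \<Rightarrow> real" where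
  "Ek m y v = (\<Sum>u<n. y u * Q m u v)"

definition N :: "(nat \<Rightarrow> real) \<Rightarrow> real" where
  "N y = (\<Sum>u<n. (y u)^2)"

lemma N_nonneg: "N y \<ge> 0" unfolding N_def by (simp add: sum_nonneg)

lemma N_Ek: "N (Ek m y) = (\<Sum>u<n. y u * Ek (2*m) y u)"
proof -
  have "N (Ek m y) = (\<Sum>v<n. (\<Sum>u<n. y u * Q m u v) * (\<Sum>u'<n. y u' * Q m u' v))"
    unfolding N_def Ek_def by (simp add: power2_eq_square)
  also have "\<dots> = (\<Sum>v<n. \<Sum>u<n. \<Sum>u'<n. y u * y u' * (Q m u v * Q m v u'))"
    using Q_sym by (intro sum.cong refl) (auto simp: sum_product mult_ac)
  also have "\<dots> = (\<Sum>u<n. \<Sum>v<n. \<Sum>u'<n. y u * y u' * (Q m u v * Q m v u'))"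
    by (rule sum.swap)
  also have "\<dots> = (\<Sum>u<n. \<Sum>u'<n. \<Sum>v<n. y u * y u' * (Q m u v * Q m v u'))"
    by (intro sum.cong refl sum.swap)
  also have "\<dots> = (\<Sum>u<n. \<Sum>u'<n. y u * y u' * Q (2*m) u u')"
    using Q_mult by (intro sum.cong refl) (auto simp: sum_distrib_left[symmetric] mult_2)
  also have "\<dots> = (\<Sum>u<n. y u * Ek (2*m) y u)"
    unfolding Ek_def using Q_sym by (intro sum.cong refl) (auto simp: sum_distrib_left mult_ac)
  finally show ?thesis .
qed

lemma N_Ek_bound: "N (Ek m y) \<le> (\<Sum>u<n. \<Sum>v<n. (Q m u v)^2) * N y"
proof -
  have "N (Ek m y) \<le> (\<Sum>v<n. N y * (\<Sum>u<n. (Q m u v)^2))"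
    unfolding N_def Ek_def by (intro sum_mono Cauchy_Schwarz_ineq_sum)
  also have "\<dots> = N y * (\<Sum>v<n. \<Sum>u<n. (Q m u v)^2)"
    by (simp add: sum_distrib_left)
  also have "(\<Sum>v<n. \<Sum>u<n. (Q m u v)^2) = (\<Sum>u<n. \<Sum>v<n. (Q m u v)^2)"
    by (rule sum.swap)
  also have "N y * \<dots> = (\<Sum>u<n. \<Sum>v<n. (Q m u v)^2) * N y" by simp
  finally show ?thesis .
qed

lemma N_Ek_sq: "(N (Ek m y))^2 \<le> N y * N (Ek (2*m) y)"
proof -
  have "(N (Ek m y))^2 = (\<Sum>u<n. y u * Ek (2*m) y u)^2" by (simp add: N_Ek)
  also have "\<dots> \<le> N y * N (Ek (2*m) y)" unfolding N_def by (rule Cauchy_Schwarz_ineq_sum)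
  finally show ?thesis .
qed

lemma doubling: "(N (Ek 1 y)) ^ (2^j) \<le> (N y) ^ (2^j - 1) * N (Ek (2^j) y)"
proof (induction j)
  case 0
  then show ?case by simp
next
  case (Suc j)
  have "(N (Ek 1 y)) ^ (2^Suc j) = ((N (Ek 1 y)) ^ (2^j))^2"
    by (simp add: power_mult[symmetric] mult.commute)
  also have "\<dots> \<le> ((N y) ^ (2^j - 1) * N (Ek (2^j) y))^2"
    using Suc N_nonneg by (intro power_mono) auto
  also have "\<dots> = (N y) ^ ((2^j - 1) * 2) * (N (Ek (2^j) y))^2"
    by (simp add: power_mult_distrib power_mult)
  also have "\<dots> \<le> (N y) ^ ((2^j - 1) * 2) * (N y * N (Ek (2*2^j) y))"
    using N_Ek_sq N_nonneg by (intro mult_left_mono) auto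
  also have "\<dots> = (N y) ^ (2^Suc j - 1) * N (Ek (2^Suc j) y)"
  proof -
    have ar: "\<And>t::nat. t \<ge> 1 \<Longrightarrow> (t - 1) * 2 + 1 = 2 * t - 1" by arith
    have "(2^j - 1) * 2 + 1 = (2::nat)^Suc j - 1"
      using ar[OF one_le_power[of "2::nat" j]] by simp
    then have "(N y) ^ (2^Suc j - 1) = (N y) ^ ((2^j - 1) * 2) * N y"
      by (metis power_add power_one_right)
    then show ?thesis by simp
  qed
  finally show ?case .
qed

lemma E_norm_bound:
  assumes lam0: "lam' \<ge> 0"
    and TB: "\<And>k. (\<Sum>u<n. Apow (2*k) u u) \<le> real d^(2*k) + real n * (real d * lam')^(2*k)"
  shows "N (Ek 1 y) \<le> lam'^2 * N y"
proof -
  have dk: "real d ^ (2*k) > 0" for k using d_pos by simp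
  have Qb: "(\<Sum>u<n. \<Sum>v<n. (Q k u v)^2) \<le> real n * lam'^(2*k)" for k
  proof -
    have "(\<Sum>u<n. \<Sum>v<n. (Q k u v)^2) = (\<Sum>u<n. Apow (2*k) u u) / real d ^ (2*k) - 1"
      by (rule Q_sq_sum)
    also have "\<dots> \<le> (real d^(2*k) + real n * (real d * lam')^(2*k)) / real d ^ (2*k) - 1"
      using TB[of k] dk[of k] by (intro diff_right_mono divide_right_mono) auto
    also have "\<dots> = real n * lam'^(2*k)"
      using dk[of k] d_ge1 by (simp add: power_mult_distrib field_simps)
    finally show ?thesis .
  qed
  define X where "X = N (Ek 1 y)"
  define Y where "Y = N y"
  define s where "s = lam'^2 * Y"
  have X0: "X \<ge> 0" and Y0: "Y \<ge> 0" unfolding X_def Y_def by (auto simp: N_nonneg)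
  have s0: "s \<ge> 0" unfolding s_def using Y0 by simp
  have key: "X ^ (2^j) \<le> real n * s ^ (2^j)" for j
  proof -
    have "X ^ (2^j) \<le> Y ^ (2^j - 1) * N (Ek (2^j) y)" unfolding X_def Y_def by (rule doubling)
    also have "\<dots> \<le> Y ^ (2^j - 1) * ((real n * lam'^(2*2^j)) * Y)"
      unfolding Y_def
      by (intro mult_left_mono order.trans[OF N_Ek_bound] mult_right_mono Qb) (auto simp: N_nonneg)
    also have "\<dots> = real n * (lam'^(2*2^j) * (Y ^ (2^j - 1) * Y))" by (simp add: mult_ac)
    also have "Y ^ (2^j - 1) * Y = Y ^ (2^j)"
      by (metis One_nat_def Suc_pred pos2 power_Suc2 zero_less_power)
    also have "lam'^(2*2^j) * Y ^ (2^j) = s ^ (2^j)"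
      unfolding s_def by (simp add: power_mult power_mult_distrib)
    finally show ?thesis .
  qed
  show ?thesis
  proof (rule ccontr)
    assume "\<not> ?thesis"
    then have Xs: "X > s" unfolding X_def Y_def s_def by simp
    show False
    proof (cases "s = 0")
      case True
      then show False using key[of 0] Xs by simp
    next
      case False
      then have sp: "s > 0" using s0 by simp
      define r where "r = X / s"
      have r1: "r > 1" unfolding r_def using Xs sp by simp
      obtain M where M: "real n < r ^ M" using real_arch_pow[OF r1] by blast
      have "r ^ M \<le> r ^ (2^M)" using r1 by (intro power_increasing) (auto intro: less_imp_le)
      also have "r ^ (2^M) = X ^ (2^M) / s ^ (2^M)" unfolding r_def by (simp add: power_divide)
      also have "\<dots> \<le> real n" using key[of M] sp by (simp add: divide_le_eq)
      finally show False using M by simp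
    qed
  qed
qed

end

definition tr :: "'a::comm_ring_1 Matrix.mat \<Rightarrow> 'a" where
  "tr M = (\<Sum>i<dim_row M. M $$ (i,i))"

lemma tr_comm: assumes A: "A \<in> carrier_mat n n" and B: "B \<in> carrier_mat n n"
  shows "tr (A * B) = tr (B * A)"
proof -
  have "tr (A * B) = (\<Sum>i<n. \<Sum>j<n. A $$ (i,j) * B $$ (j,i))"
    unfolding tr_def using A B
    by (intro sum.cong refl) (auto simp: scalar_prod_def atLeast0LessThan)
  also have "\<dots> = (\<Sum>j<n. \<Sum>i<n. A $$ (i,j) * B $$ (j,i))" by (rule sum.swap)
  also have "\<dots> = tr (B * A)"
    unfolding tr_def using A B
    by (intro sum.cong refl) (auto simp: scalar_prod_def atLeast0LessThan mult.commute)
  finally show ?thesis .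
qed

lemma pow_similar: assumes "similar_mat_wit A C P Q" "A \<in> carrier_mat n n"
  shows "A ^\<^sub>m m = P * (C ^\<^sub>m m) * Q"
proof -
  from assms have cr: "C \<in> carrier_mat n n" "P \<in> carrier_mat n n" "Q \<in> carrier_mat n n"
    and PQ: "P * Q = 1\<^sub>m n" and QP: "Q * P = 1\<^sub>m n" and AC: "A = P * C * Q"
    unfolding similar_mat_wit_def Let_def by auto
  show ?thesis
  proof (induction m)
    case 0
    have "P * (C ^\<^sub>m 0) * Q = P * Q" using cr by simp
    then show ?case using PQ assms(2) by simp
  next
    case (Suc m)
    have "A ^\<^sub>m Suc m = (P * (C ^\<^sub>m m) * Q) * (P * C * Q)" using Suc AC by simp
    also have "\<dots> = P * (C ^\<^sub>m m) * (Q * P) * C * Q"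
      using cr by (simp add: assoc_mult_mat[of _ n n _ n _ n] mult_carrier_mat[of _ n n _ n])
    also have "\<dots> = P * (C ^\<^sub>m m) * C * Q"
      using cr QP by simp
    also have "\<dots> = P * (C ^\<^sub>m Suc m) * Q"
      using cr by (simp add: assoc_mult_mat[of _ n n _ n _ n] mult_carrier_mat[of _ n n _ n])
    finally show ?case .
  qed
qed

lemma upper_pow: fixes C :: "'a::comm_ring_1 Matrix.mat" assumes C: "C \<in> carrier_mat n n" and ut: "upper_triangular C"
  shows "(\<forall>i j. i < n \<longrightarrow> j < i \<longrightarrow> (C ^\<^sub>m m) $$ (i,j) = 0) \<and> (\<forall>i<n. (C ^\<^sub>m m) $$ (i,i) = (C $$ (i,i))^m)"
proof (induction m)
  case 0
  then show ?case using C by auto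
next
  case (Suc m)
  have ix: "(C ^\<^sub>m Suc m) $$ (i,j) = (\<Sum>k<n. (C ^\<^sub>m m) $$ (i,k) * C $$ (k,j))" if "i < n" "j < n" for i j
    using C that by (simp add: scalar_prod_def atLeast0LessThan)
  have Cz: "C $$ (k,j) = 0" if "j < k" "k < n" for j k using ut that C by (auto intro: upper_triangularD)
  have A: "(C ^\<^sub>m Suc m) $$ (i,j) = 0" if "i < n" "j < i" for i j
  proof -
    have "(C ^\<^sub>m Suc m) $$ (i,j) = (\<Sum>k<n. (C ^\<^sub>m m) $$ (i,k) * C $$ (k,j))" using that by (intro ix) auto
    also have "\<dots> = 0"
    proof (rule sum.neutral, rule ballI)
      fix k assume k: "k \<in> {..<n}"
      show "(C ^\<^sub>m m) $$ (i,k) * C $$ (k,j) = 0"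
      proof (cases "k < i")
        case True then show ?thesis using Suc that by simp
      next
        case False then show ?thesis using Cz[of j k] that k by simp
      qed
    qed
    finally show ?thesis .
  qed
  have B: "(C ^\<^sub>m Suc m) $$ (i,i) = (C $$ (i,i))^Suc m" if "i < n" for i
  proof -
    have "(C ^\<^sub>m Suc m) $$ (i,i) = (\<Sum>k<n. (C ^\<^sub>m m) $$ (i,k) * C $$ (k,i))" using that by (intro ix) auto
    also have "\<dots> = (\<Sum>k\<in>{i}. (C ^\<^sub>m m) $$ (i,k) * C $$ (k,i))"
    proof (rule sum.mono_neutral_right)
      show "\<forall>k\<in>{..<n} - {i}. (C ^\<^sub>m m) $$ (i,k) * C $$ (k,i) = 0"
      proof
        fix k assume k: "k \<in> {..<n} - {i}"
        show "(C ^\<^sub>m m) $$ (i,k) * C $$ (k,i) = 0"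
        proof (cases "k < i")
          case True then show ?thesis using Suc that by simp
        next
          case False then show ?thesis using Cz[of i k] that k by simp
        qed
      qed
    qed (use that in auto)
    also have "\<dots> = (C $$ (i,i))^Suc m" using Suc that by (simp add: mult.commute)
    finally show ?thesis .
  qed
  show ?case using A B by auto
qed

lemma norm_sum_mset_le: "cmod (sum_mset (image_mset f E)) \<le> sum_mset (image_mset (\<lambda>x. cmod (f x)) E)"
  by (induction E) (auto intro: order.trans[OF norm_triangle_ineq])

lemma sum_mset_bound: fixes f :: "'b \<Rightarrow> real"
  shows "(\<forall>x\<in>#M. f x \<le> c) \<Longrightarrow> sum_mset (image_mset f M) \<le> real (size M) * c"
  by (induction M) (auto simp: algebra_simps)

lemma proots_linear_prod: "proots (\<Prod>a\<leftarrow>as. [:- (a::complex), 1:]) = mset as"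
proof -
  have "proots (\<Prod>a\<leftarrow>as. [:- (a::complex), 1:]) = (\<Sum>p\<leftarrow>map (\<lambda>a. [:- a, 1:]) as. proots p)"
  proof -
    have nz: "0 \<notin> set (map (\<lambda>a. [:- a, 1:]) as)" by auto
    show ?thesis using proots_prod_list[OF nz] by (simp add: o_def)
  qed
  also have "\<dots> = mset as"
  proof (induction as)
    case Nil then show ?case by simp
  next
    case (Cons x xs)
    have "proots [:- x, 1:] = {#x#}" using proots_linear_factor[of "-x"] by simp
    then show ?case using Cons by simp
  qed
  finally show ?thesis .
qed

context G begin

lemma AM_carrier: "adj_mat n a \<in> carrier_mat n n" unfolding adj_mat_def by simp

lemma AM_pow: "u < n \<Longrightarrow> v < n \<Longrightarrow> (adj_mat n a ^\<^sub>m m) $$ (u,v) = complex_of_real (Apow m u v)"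
proof (induction m arbitrary: v)
  case 0
  then show ?case using AM_carrier by simp
next
  case (Suc m)
  have "(adj_mat n a ^\<^sub>m Suc m) $$ (u,v) = (\<Sum>k<n. (adj_mat n a ^\<^sub>m m) $$ (u,k) * adj_mat n a $$ (k,v))"
    using Suc.prems AM_carrier by (simp add: scalar_prod_def atLeast0LessThan)
  also have "\<dots> = (\<Sum>k<n. complex_of_real (Apow m u k * real (a k v)))"
    using Suc by (intro sum.cong refl) (auto simp: adj_mat_def)
  also have "\<dots> = complex_of_real (Apow (Suc m) u v)" by (simp only: of_real_sum Apow.simps)
  finally show ?case .
qed

lemma tr_AM_pow: "tr (adj_mat n a ^\<^sub>m m) = complex_of_real (\<Sum>u<n. Apow m u u)"
  unfolding tr_def using AM_carrier AM_pow by (simp add: of_real_sum)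

lemma eig_bound: assumes "\<mu> \<in># eigenvalues_mset (adj_mat n a)" shows "cmod \<mu> \<le> real d"
proof -
  have "poly (char_poly (adj_mat n a)) \<mu> = 0" using assms unfolding eigenvalues_mset_def
    by (cases "char_poly (adj_mat n a) = 0") auto
  then have "eigenvalue (adj_mat n a) \<mu>" using eigenvalue_root_char_poly[OF AM_carrier] by simp
  then obtain v where ev: "eigenvector (adj_mat n a) v \<mu>" unfolding eigenvalue_def by auto
  then have v: "v \<in> carrier_vec n" "v \<noteq> 0\<^sub>v n" "adj_mat n a *\<^sub>v v = \<mu> \<cdot>\<^sub>v v"
    unfolding eigenvector_def using AM_carrier by auto
  define f where "f j = cmod (v $ j)" for j
  define mx where "mx = Max (f ` {..<n})"
  have "mx \<in> f ` {..<n}" unfolding mx_def using n_pos by (intro Max_in) auto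
  then obtain i where i: "i < n" "f i = mx" by auto
  have fle: "f j \<le> f i" if "j < n" for j
  proof -
    have "f j \<le> Max (f ` {..<n})" using that by (intro Max_ge) auto
    then show ?thesis using i(2) unfolding mx_def by simp
  qed
  obtain j where j: "j < n" "v $ j \<noteq> 0"
  proof (rule ccontr)
    assume "\<not> thesis"
    then have "\<forall>j<n. v $ j = 0" using that by blast
    then have "v = 0\<^sub>v n" using v(1) by (intro eq_vecI) auto
    then show False using v(2) by simp
  qed
  have fi: "f i > 0" using fle[OF j(1)] j(2) unfolding f_def by (meson norm_ge_zero norm_le_zero_iff order.trans not_le)
  have "(adj_mat n a *\<^sub>v v) $ i = (\<Sum>j<n. of_nat (a i j) * v $ j)"
    using i v(1) AM_carrier by (simp add: scalar_prod_def atLeast0LessThan adj_mat_def)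
  then have "\<mu> * v $ i = (\<Sum>j<n. of_nat (a i j) * v $ j)" using v(3) i v(1) by simp
  then have "cmod \<mu> * f i = cmod (\<Sum>j<n. of_nat (a i j) * v $ j)" unfolding f_def by (metis norm_mult)
  also have "\<dots> \<le> (\<Sum>j<n. real (a i j) * f j)"
    unfolding f_def by (rule order.trans[OF norm_sum]) (simp add: norm_mult)
  also have "\<dots> \<le> (\<Sum>j<n. real (a i j) * f i)"
    using fle by (intro sum_mono mult_left_mono) auto
  also have "\<dots> = (\<Sum>j<n. real (a i j)) * f i" by (rule sum_distrib_right[symmetric])
  also have "\<dots> = real d * f i" using rowsum[OF i(1)] by simp
  finally show ?thesis using fi by simp
qed

end

context G begin

lemma trace_bound: assumes ex: "expander n a d lam"
  shows "(\<Sum>u<n. Apow m u u) \<le> real d ^ m + real n * (real d * max lam 0)^m"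
proof -
  let ?A = "adj_mat n a"
  obtain as where cp: "char_poly ?A = (\<Prod>a\<leftarrow>as. [:- a, 1:])" and len: "length as = n"
    using char_poly_factorized[OF AM_carrier] by blast
  obtain C P Q where sd: "schur_decomposition ?A as = (C,P,Q)" by (cases "schur_decomposition ?A as") auto
  from schur_decomposition[OF AM_carrier cp sd]
  have sim: "similar_mat_wit ?A C P Q" and ut: "upper_triangular C" and dg: "diag_mat C = as" by auto
  from sim AM_carrier have cr: "C \<in> carrier_mat n n" "P \<in> carrier_mat n n" "Q \<in> carrier_mat n n"
    and QP: "Q * P = 1\<^sub>m n"
    unfolding similar_mat_wit_def Let_def by auto
  have eigs: "eigenvalues_mset ?A = mset as"
    unfolding eigenvalues_mset_def cp by (rule proots_linear_prod)
  have as_eq: "as = map (\<lambda>i. C $$ (i,i)) [0..<n]" using dg cr unfolding diag_mat_def by simp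
  have "tr (?A ^\<^sub>m m) = tr (P * (C ^\<^sub>m m * Q))"
    using pow_similar[OF sim AM_carrier] cr by (simp add: assoc_mult_mat[of _ n n _ n _ n])
  also have "\<dots> = tr ((C ^\<^sub>m m * Q) * P)" using cr by (intro tr_comm) auto
  also have "(C ^\<^sub>m m * Q) * P = C ^\<^sub>m m"
    using cr QP by (simp add: assoc_mult_mat[of _ n n _ n _ n])
  also have "tr (C ^\<^sub>m m) = (\<Sum>i<n. (C $$ (i,i))^m)"
    unfolding tr_def using upper_pow[OF cr(1) ut] cr by simp
  also have "\<dots> = sum_mset (image_mset (\<lambda>x. x^m) (mset as))"
    unfolding as_eq by (simp add: sum_mset_sum_list sum_list_distinct_conv_sum_set atLeast0LessThan multiset.map_comp o_def sum_unfold_sum_mset)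
  finally have trc: "complex_of_real (\<Sum>u<n. Apow m u u) = sum_mset (image_mset (\<lambda>x. x^m) (mset as))"
    using tr_AM_pow by simp
  define M where "M = image_mset cmod (mset as)"
  have "(\<Sum>u<n. Apow m u u) \<le> cmod (complex_of_real (\<Sum>u<n. Apow m u u))"
    by (simp only: norm_of_real abs_ge_self)
  also have "\<dots> \<le> sum_mset (image_mset (\<lambda>x. cmod (x^m)) (mset as))"
    unfolding trc by (rule norm_sum_mset_le)
  also have "\<dots> = sum_mset (image_mset (\<lambda>x. x^m) M)"
    unfolding M_def by (simp add: multiset.map_comp o_def norm_power)
  finally have R1: "(\<Sum>u<n. Apow m u u) \<le> sum_mset (image_mset (\<lambda>x. x^m) M)" .
  have Mne: "M \<noteq> {#}" unfolding M_def using len n_pos by auto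
  define mx where "mx = Max_mset M"
  have mxM: "mx \<in># M" unfolding mx_def using Mne by (rule Max_in_mset)
  have Mdec: "M = add_mset mx (M - {#mx#})" using mxM by simp
  have mxd: "mx \<le> real d" "mx \<ge> 0"
    using mxM eig_bound unfolding M_def eigs[symmetric] by auto
  have rest: "\<forall>x\<in>#M - {#mx#}. x \<le> real d * lam"
    using ex unfolding expander_def Let_def eigs M_def mx_def by auto
  have rest0: "\<forall>x\<in>#M - {#mx#}. x \<ge> 0"
  proof
    fix x assume "x \<in># M - {#mx#}"
    then have "x \<in># M" by (rule in_diffD)
    then show "x \<ge> 0" unfolding M_def by auto
  qed
  have "sum_mset (image_mset (\<lambda>x. x^m) M) = mx^m + sum_mset (image_mset (\<lambda>x. x^m) (M - {#mx#}))"
    by (subst Mdec) simp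
  also have "\<dots> \<le> real d ^ m + real (size (M - {#mx#})) * (real d * max lam 0)^m"
  proof (rule add_mono)
    show "mx^m \<le> real d ^ m" using mxd by (intro power_mono) auto
    show "sum_mset (image_mset (\<lambda>x. x^m) (M - {#mx#})) \<le> real (size (M - {#mx#})) * (real d * max lam 0)^m"
    proof (rule sum_mset_bound, rule ballI)
      fix x assume x: "x \<in># M - {#mx#}"
      have "x \<le> real d * max lam 0" using rest x d_pos
        by (meson max.cobounded1 mult_left_mono of_nat_0_le_iff order.trans)
      then show "x^m \<le> (real d * max lam 0)^m" using rest0 x by (intro power_mono) auto
    qed
  qed
  also have "\<dots> \<le> real d ^ m + real n * (real d * max lam 0)^m"
  proof -
    have "size (M - {#mx#}) = size M - 1" using mxM by (rule size_Diff_singleton)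
    moreover have "size M = n" unfolding M_def using len by simp
    ultimately have "size (M - {#mx#}) \<le> n" by simp
    then show ?thesis using d_pos by (intro add_left_mono mult_right_mono) auto
  qed
  finally show ?thesis using R1 by simp
qed

end

context G begin

lemma E_norm_expander: assumes "expander n a d lam"
  shows "N (Ek 1 y) \<le> (max lam 0)^2 * N y"
  by (rule E_norm_bound) (use trace_bound[OF assms] in auto)

definition L :: "(nat \<Rightarrow> real) \<Rightarrow> real" where "L y = L2_set y {..<n}"

lemma L_N: "L y = sqrt (N y)" unfolding L_def L2_set_def N_def by simp

lemma L_nonneg: "L y \<ge> 0" unfolding L_def by simp

lemma L_scale: "L (\<lambda>v. r * z v) = \<bar>r\<bar> * L z"
  unfolding L_def L2_set_def
  by (simp add: power_mult_distrib real_sqrt_mult flip: sum_distrib_left)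

lemma L_mult_bound: assumes "\<forall>v<n. \<bar>c v\<bar> \<le> H" shows "L (\<lambda>v. c v * z v) \<le> H * L z"
proof -
  have H0: "H \<ge> 0" using assms n_pos by (meson abs_ge_zero order.trans)
  have "(\<Sum>v<n. (c v * z v)^2) \<le> (\<Sum>v<n. H^2 * (z v)^2)"
  proof (rule sum_mono)
    fix v assume "v \<in> {..<n}"
    then have "(c v)^2 \<le> H^2" using assms by (metis abs_ge_zero lessThan_iff power2_abs power_mono)
    then show "(c v * z v)^2 \<le> H^2 * (z v)^2" by (simp add: power_mult_distrib mult_right_mono)
  qed
  then have "L (\<lambda>v. c v * z v) \<le> sqrt (\<Sum>v<n. H^2 * (z v)^2)"
    unfolding L_def L2_set_def by (rule real_sqrt_le_mono)
  also have "\<dots> = H * L z" unfolding L_def L2_set_def using H0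
    by (simp add: real_sqrt_mult flip: sum_distrib_left)
  finally show ?thesis .
qed

lemma sum_abs_le: "\<bar>\<Sum>u<n. y u\<bar> \<le> sqrt (real n) * L y"
proof -
  have "\<bar>\<Sum>u<n. y u\<bar> \<le> (\<Sum>u<n. \<bar>y u\<bar> * \<bar>1\<bar>)" by (simp add: sum_abs)
  also have "\<dots> \<le> L2_set y {..<n} * L2_set (\<lambda>_. 1) {..<n}" by (rule L2_set_mult_ineq)
  also have "\<dots> = sqrt (real n) * L y" unfolding L_def by (simp add: L2_set_constant)
  finally show ?thesis .
qed

definition Pt :: "(nat \<Rightarrow> real) \<Rightarrow> nat \<Rightarrow> real" where
  "Pt y v = (\<Sum>u<n. y u * P u v)"

lemma Pt_decomp: "v < n \<Longrightarrow> Pt y v = (\<Sum>u<n. y u) / real n + Ek 1 y v"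
proof -
  assume v: "v < n"
  have qq: "Q 1 u v = P u v - 1 / real n" if "u < n" for u
    unfolding Q_def P_def using Apow_1[OF that] by simp
  have qe: "y u * Q 1 u v = y u * P u v - y u / real n" if "u < n" for u
    using qq[OF that] by (simp add: right_diff_distrib)
  have "Ek 1 y v = (\<Sum>u<n. y u * P u v - y u / real n)"
    unfolding Ek_def by (rule sum.cong[OF refl], rule qe) auto
  then show ?thesis unfolding Pt_def by (simp add: sum_subtractf sum_divide_distrib)
qed

lemma step_bound:
  assumes lam0: "lam' \<ge> 0" and EB: "\<And>y. N (Ek 1 y) \<le> lam'^2 * N y" and Hb: "\<forall>v<n. \<bar>hh v\<bar> \<le> H"
  shows "L (\<lambda>v. hh v * Pt y v) \<le> (L hh / sqrt (real n) + H * lam') * L y"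
proof -
  define S where "S = (\<Sum>u<n. y u)"
  have sn: "sqrt (real n) > 0" using n_pos by simp
  have "L (\<lambda>v. hh v * Pt y v) = L (\<lambda>v. (S / real n) * hh v + hh v * Ek 1 y v)"
    unfolding L_def S_def using Pt_decomp by (intro L2_set_cong) (auto simp: algebra_simps)
  also have "\<dots> \<le> L (\<lambda>v. (S / real n) * hh v) + L (\<lambda>v. hh v * Ek 1 y v)"
    unfolding L_def by (rule L2_set_triangle_ineq)
  also have "L (\<lambda>v. (S / real n) * hh v) = \<bar>S / real n\<bar> * L hh" by (rule L_scale)
  also have "\<bar>S / real n\<bar> \<le> L y / sqrt (real n)"
  proof -
    have "\<bar>S / real n\<bar> = \<bar>S\<bar> / (sqrt (real n) * sqrt (real n))" using n_pos by simp
    also have "\<dots> \<le> (sqrt (real n) * L y) / (sqrt (real n) * sqrt (real n))"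
      unfolding S_def using sn by (intro divide_right_mono sum_abs_le) auto
    also have "\<dots> = L y / sqrt (real n)" by (rule mult_divide_mult_cancel_left) (use sn in simp)
    finally show ?thesis .
  qed
  also have "L (\<lambda>v. hh v * Ek 1 y v) \<le> H * L (Ek 1 y)" by (rule L_mult_bound[OF Hb])
  also have "L (Ek 1 y) \<le> lam' * L y"
  proof -
    have "L (Ek 1 y) \<le> sqrt (lam'^2 * N y)" unfolding L_N by (rule real_sqrt_le_mono[OF EB])
    also have "\<dots> = lam' * L y" unfolding L_N using lam0 by (simp add: real_sqrt_mult)
    finally show ?thesis .
  qed
  finally show ?thesis
    using L_nonneg[of hh] L_nonneg[of y] Hb n_pos
    by (smt (verit) mult_left_mono mult_right_mono abs_ge_zero lessThan_iff distrib_right mult.assoc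
        mult.commute times_divide_eq_left)
qed

lemma Phi_bound:
  assumes lam0: "lam' \<ge> 0" and EB: "\<And>y. N (Ek 1 y) \<le> lam'^2 * N y" and Hb: "\<forall>v<n. \<bar>hh v\<bar> \<le> H"
  shows "L (Phi (\<lambda>_. hh) (Suc k)) \<le> sqrt (real n) * (L hh / sqrt (real n) + H * lam') ^ Suc k"
proof (induction k)
  have H0: "H \<ge> 0" using Hb n_pos by (meson abs_ge_zero order.trans)
  have sn: "sqrt (real n) > 0" using n_pos by simp
  case 0
  have p1: "Phi (\<lambda>_. hh) (Suc 0) = hh" by (rule ext) simp
  have "L (Phi (\<lambda>_. hh) (Suc 0)) = sqrt (real n) * (L hh / sqrt (real n))"
    using sn unfolding p1 by simp
  also have "\<dots> \<le> sqrt (real n) * (L hh / sqrt (real n) + H * lam')"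
    using sn H0 lam0 by (intro mult_left_mono) auto
  finally show ?case unfolding p1 by simp
next
  have H0: "H \<ge> 0" using Hb n_pos by (meson abs_ge_zero order.trans)
  have sn: "sqrt (real n) > 0" using n_pos by simp
  define \<rho> where "\<rho> = L hh / sqrt (real n) + H * lam'"
  have r0: "\<rho> \<ge> 0" unfolding \<rho>_def using H0 lam0 sn L_nonneg[of hh] by simp
  case (Suc k)
  have "Phi (\<lambda>_. hh) (Suc (Suc k)) = (\<lambda>v. hh v * Pt (Phi (\<lambda>_. hh) (Suc k)) v)"
    unfolding Pt_def by auto
  then have "L (Phi (\<lambda>_. hh) (Suc (Suc k))) \<le> \<rho> * L (Phi (\<lambda>_. hh) (Suc k))"
    unfolding \<rho>_def using step_bound[OF lam0 EB Hb] by simp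
  also have "\<dots> \<le> \<rho> * (sqrt (real n) * \<rho> ^ Suc k)"
    using Suc r0 unfolding \<rho>_def by (intro mult_left_mono) auto
  finally show ?case unfolding \<rho>_def by (simp del: Phi.simps add: mult_ac)
qed

lemma exp_prod_bound:
  assumes lam0: "lam' \<ge> 0" and EB: "\<And>y. N (Ek 1 y) \<le> lam'^2 * N y" and Hb: "\<forall>v<n. \<bar>hh v\<bar> \<le> H"
  shows "measure_pmf.expectation (walk_pmf n a d (Suc k)) (\<lambda>w. \<Prod>i<Suc k. hh (w!i))
     \<le> (L hh / sqrt (real n) + H * lam') ^ Suc k"
proof -
  have sn: "sqrt (real n) > 0" using n_pos by simp
  have "measure_pmf.expectation (walk_pmf n a d (Suc k)) (\<lambda>w. \<Prod>i<Suc k. hh (w!i))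
    = measure_pmf.expectation (walk_pmf n a d (Suc k)) (\<lambda>w. (\<Prod>i<Suc k. (\<lambda>_. hh) i (w!i)) * (\<lambda>_. 1) (last w))"
    by simp
  also have "\<dots> = (\<Sum>v<n. Phi (\<lambda>_. hh) (Suc k) v * 1) / real n" by (rule walk_exp)
  also have "\<dots> \<le> \<bar>\<Sum>v<n. Phi (\<lambda>_. hh) (Suc k) v\<bar> / real n"
    by (intro divide_right_mono) auto
  also have "\<dots> \<le> (sqrt (real n) * L (Phi (\<lambda>_. hh) (Suc k))) / real n"
    by (intro divide_right_mono sum_abs_le) auto
  also have "\<dots> \<le> (sqrt (real n) * (sqrt (real n) * (L hh / sqrt (real n) + H * lam') ^ Suc k)) / real n"
    using sn by (intro divide_right_mono mult_left_mono Phi_bound[OF lam0 EB Hb]) auto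
  also have "\<dots> = (L hh / sqrt (real n) + H * lam') ^ Suc k"
    using n_pos by (simp add: mult.assoc[symmetric])
  finally show ?thesis .
qed

lemma marginal:
  assumes "i < Suc k"
  shows "measure_pmf.prob (walk_pmf n a d (Suc k)) {w. w!i \<in> S} =
         measure_pmf.prob (pmf_of_set {..<n}) S"
proof -
  define h where "h j v = (if j = i then indicator S v else (1::real))" for j v
  have A: "j \<le> i \<Longrightarrow> v < n \<Longrightarrow> Phi h (Suc j) v = h j v" for j v
  proof (induction j arbitrary: v)
    case 0 then show ?case by simp
  next
    case (Suc j)
    have one: "Phi h (Suc j) u = 1" if "u < n" for u
    proof -
      have "j \<noteq> i" using Suc.prems by simp
      then have "h j u = 1" unfolding h_def by simp
      moreover have "Phi h (Suc j) u = h j u" using Suc.IH[OF _ that] Suc.prems by simp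
      ultimately show ?thesis by simp
    qed
    have "Phi h (Suc (Suc j)) v = h (Suc j) v * (\<Sum>u<n. Phi h (Suc j) u * P u v)" by simp
    also have "(\<Sum>u<n. Phi h (Suc j) u * P u v) = (\<Sum>u<n. P u v)"
      using one by (intro sum.cong refl) auto
    also have "\<dots> = 1" using P_colsum Suc by simp
    finally show ?case by simp
  qed
  have B: "(\<Sum>v<n. Phi h (Suc (i + t)) v) = real (card (S \<inter> {..<n}))" for t
  proof (induction t)
    case 0
    have "(\<Sum>v<n. Phi h (Suc (i + 0)) v) = (\<Sum>v<n. indicator S v)"
      using A by (intro sum.cong) (auto simp: h_def)
    also have "\<dots> = real (card (S \<inter> {..<n}))"
      by (simp add: indicator_def sum.If_cases Int_commute)
    finally show ?case .
  next
    case (Suc t)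
    have "(\<Sum>v<n. Phi h (Suc (i + Suc t)) v) = (\<Sum>v<n. \<Sum>u<n. Phi h (Suc (i + t)) u * P u v)"
      by (simp add: h_def)
    also have "\<dots> = (\<Sum>u<n. \<Sum>v<n. Phi h (Suc (i + t)) u * P u v)" by (rule sum.swap)
    also have "\<dots> = (\<Sum>u<n. Phi h (Suc (i + t)) u)"
      using P_rowsum by (intro sum.cong refl) (auto simp: sum_distrib_left[symmetric])
    finally show ?case using Suc by simp
  qed
  have "measure_pmf.prob (walk_pmf n a d (Suc k)) {w. w!i \<in> S} =
      measure_pmf.expectation (walk_pmf n a d (Suc k)) (\<lambda>w. (\<Prod>j<Suc k. h j (w!j)) * (\<lambda>_. 1) (last w))"
  proof -
    have "(\<lambda>w. (\<Prod>j<Suc k. h j (w!j)) * (\<lambda>_. 1) (last w)) = indicator {w. w!i \<in> S}"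
      using assms by (auto simp: h_def prod.delta indicator_def)
    then show ?thesis by simp
  qed
  also have "\<dots> = (\<Sum>v<n. Phi h (Suc k) v * 1) / real n" by (rule walk_exp)
  also have "(\<Sum>v<n. Phi h (Suc k) v * 1) = real (card (S \<inter> {..<n}))"
    using B[of "k - i"] assms by simp
  also have "real (card (S \<inter> {..<n})) / real n = measure_pmf.prob (pmf_of_set {..<n}) S"
    using n_pos by (subst measure_pmf_of_set) (auto simp: Int_commute)
  finally show ?thesis .
qed

end

lemma e_gt: "exp (1::real) > 2.7"
  using e_approx_32 by (simp add: abs_if split: if_split_asm)

lemma exp2_eq: "exp (2::real) = exp 1 * exp 1" using exp_add[of "1::real" 1] by simp
lemma exp3_eq: "exp (3::real) = exp 1 * exp 2" using exp_add[of "1::real" 2] by simp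

lemma C_ge: "exp 2 + exp 3 + (exp 1 - 1) \<ge> (24::real)"
proof -
  have e: "exp (1::real) \<ge> 2.7" using e_gt by simp
  have e2: "exp (2::real) \<ge> 7.29" unfolding exp2_eq using mult_mono[OF e e] by simp
  have e3: "exp (3::real) \<ge> 19.683" unfolding exp3_eq using mult_mono[OF e e2] by simp
  show ?thesis using e e2 e3 by simp
qed

lemma ln_ge2: assumes "x \<ge> (20::real)" shows "ln x \<ge> 2"
proof -
  have "exp (2::real) \<le> 20" unfolding exp2_eq using e_less_272 mult_mono[of "exp 1" "2.72" "exp 1" "2.72::real"]
    by simp
  then show ?thesis using assms by (subst ln_ge_iff) auto
qed

lemma ln_cube_ge8: assumes "x \<ge> (20::real)" shows "(ln x)^3 \<ge> 8"
proof -
  have "(2::real)^3 \<le> (ln x)^3" using ln_ge2[OF assms] by (intro power_mono) auto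
  then show ?thesis by simp
qed

lemma tail_8: assumes "x \<ge> (20::real)" shows "exp (- x * (ln x)^3) \<le> exp (- 8 * x)"
  using ln_cube_ge8[OF assms] assms by (simp add: mult_left_mono)

lemma small_case_num: assumes "l \<ge> (1::nat)" "l < 20"
  shows "real l * exp (- 20 * (ln 20)^3) \<le> exp (- real l)"
proof -
  have "real l * exp (- 20 * (ln 20)^3) \<le> real l * exp (- 160)"
    using tail_8[of 20] by (intro mult_left_mono) auto
  also have "\<dots> \<le> exp (- real l)"
  proof -
    have "real l \<le> 1 + (160 - real l)" using assms by simp
    also have "\<dots> \<le> exp (160 - real l)" by (rule exp_ge_add_one_self)
    also have "exp (160 - real l) = exp (- real l) / exp (-160)" by (simp add: exp_diff exp_minus field_simps)
    finally show ?thesis by (simp add: field_simps)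
  qed
  finally show ?thesis .
qed

lemma large_case_num: assumes "real l \<ge> 20"
  shows "real l * exp (- real l * (ln (real l))^3) + exp (- 3 * real l) \<le> exp (- real l)"
proof -
  have a: "real l * exp (- real l * (ln (real l))^3) \<le> real l * exp (- 8 * real l)"
    using tail_8[OF assms] by (intro mult_left_mono) auto
  have b: "real l * exp (- 8 * real l) \<le> exp (- real l) / 2"
  proof -
    have "2 * real l \<le> 1 + 7 * real l" using assms by simp
    also have "\<dots> \<le> exp (7 * real l)" by (rule exp_ge_add_one_self)
    finally have "2 * real l \<le> exp (7 * real l)" .
    then have "2 * real l * exp (- 8 * real l) \<le> exp (7 * real l) * exp (- 8 * real l)"
      by (intro mult_right_mono) auto
    also have "\<dots> = exp (- real l)" by (simp add: exp_add[symmetric])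
    finally show ?thesis by simp
  qed
  have c: "exp (- 3 * real l) \<le> exp (- real l) / 2"
  proof -
    have "2 \<le> 1 + 2 * real l" using assms by simp
    also have "\<dots> \<le> exp (2 * real l)" by (rule exp_ge_add_one_self)
    finally have "2 * exp (- 3 * real l) \<le> exp (2 * real l) * exp (- 3 * real l)"
      by (intro mult_right_mono) auto
    also have "\<dots> = exp (- real l)" by (simp add: exp_add[symmetric])
    finally show ?thesis by simp
  qed
  show ?thesis using a b c by simp
qed

lemma rho_num: assumes C24: "C \<ge> (24::real)" and rho: "\<rho> \<le> exp 20 + 2" and r0: "\<rho> \<ge> 0"
  shows "exp (- C * real l) * \<rho> ^ l \<le> exp (- 3 * real l)"
proof -
  have "exp 20 + 2 \<le> exp (21::real)"
  proof -
    have "exp (21::real) = exp 1 * exp 20" using exp_add[of "1::real" 20] by simp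
    also have "\<dots> \<ge> 2 * exp 20" using e_gt by (intro mult_right_mono) auto
    finally have "exp (21::real) \<ge> 2 * exp 20" .
    moreover have "exp (20::real) \<ge> 2" using exp_ge_add_one_self[of "20::real"] by simp
    ultimately show ?thesis by simp
  qed
  moreover have "exp (21::real) \<le> exp (C - 3)" using C24 by simp
  ultimately have r: "\<rho> \<le> exp (C - 3)" using rho by linarith
  have "exp (- C * real l) * \<rho> ^ l = (exp (- C) * \<rho>) ^ l"
    by (simp add: power_mult_distrib exp_of_nat_mult[symmetric] mult.commute)
  also have "\<dots> \<le> (exp (- C) * exp (C - 3)) ^ l" using r r0 by (intro power_mono mult_left_mono) auto
  also have "exp (- C) * exp (C - 3) = exp (- 3)" by (simp add: exp_add[symmetric])
  also have "exp (- 3) ^ l = exp (- 3 * real l)" by (simp add: exp_of_nat_mult[symmetric] mult.commute)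
  finally show ?thesis .
qed

lemma geom_half: "(\<Sum>j\<in>{20..l}. (1/2::real)^j) \<le> 2"
proof -
  have "(\<Sum>j\<in>{20..l}. (1/2::real)^j) \<le> (\<Sum>j<Suc l. (1/2::real)^j)"
    by (intro sum_mono2) auto
  also have "\<dots> = (1 - (1/2)^Suc l) / (1 - 1/2)" by (subst sum_gp_strict) simp
  also have "\<dots> \<le> 2" by simp
  finally show ?thesis .
qed

lemma exp_half: assumes "j \<ge> (1::nat)" shows "exp (2 * real j + 2) * exp (- 8 * real j) \<le> (1/2::real)^j"
proof -
  have "exp (2 * real j + 2) * exp (- 8 * real j) = exp (2 - 6 * real j)" by (simp add: exp_add[symmetric])
  also have "\<dots> \<le> exp (- real j)" using assms by simp
  also have "\<dots> = exp (-1) ^ j" by (simp add: exp_of_nat_mult[symmetric])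
  also have "\<dots> \<le> (1/2) ^ j"
  proof (rule power_mono)
    have "exp (1::real) \<ge> 2" using e_gt by simp
    then show "exp (-1::real) \<le> 1/2" by (simp add: exp_minus field_simps)
  qed simp
  finally show ?thesis .
qed

context G begin

lemma walk_finite: "finite (set_pmf (walk_pmf n a d m))"
  using walk_supp W_finite by (rule finite_subset)

lemma union_bound:
  assumes tail: "\<forall>x::real. x \<ge> 20 \<longrightarrow>
           measure_pmf.prob (pmf_of_set {..<n}) {v. f v \<ge> x} \<le> exp (- x * (ln x) ^ 3)"
    and x: "x \<ge> 20"
  shows "measure_pmf.prob (walk_pmf n a d (Suc k)) {w. \<exists>i<Suc k. f (w!i) \<ge> x}
     \<le> real (Suc k) * exp (- x * (ln x) ^ 3)"
proof -
  have "{w. \<exists>i<Suc k. f (w!i) \<ge> x} = (\<Union>i\<in>{..<Suc k}. {w. w!i \<in> {v. f v \<ge> x}})" by auto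
  then have "measure_pmf.prob (walk_pmf n a d (Suc k)) {w. \<exists>i<Suc k. f (w!i) \<ge> x}
     \<le> (\<Sum>i\<in>{..<Suc k}. measure_pmf.prob (walk_pmf n a d (Suc k)) {w. w!i \<in> {v. f v \<ge> x}})"
    by (simp only:) (rule measure_pmf.finite_measure_subadditive_finite, auto)
  also have "\<dots> = (\<Sum>i\<in>{..<Suc k}. measure_pmf.prob (pmf_of_set {..<n}) {v. f v \<ge> x})"
    by (intro sum.cong refl) (use marginal[of _ k "{v. f v \<ge> x}"] in auto)
  also have "\<dots> \<le> (\<Sum>i\<in>{..<Suc k}. exp (- x * (ln x) ^ 3))"
    using tail x by (intro sum_mono) auto
  also have "\<dots> = real (Suc k) * exp (- x * (ln x) ^ 3)" by simp
  finally show ?thesis .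
qed

lemma markov:
  "measure_pmf.prob (walk_pmf n a d (Suc k)) {w. (\<Sum>i<Suc k. g (w!i)) \<ge> c}
   \<le> exp (- c) * measure_pmf.expectation (walk_pmf n a d (Suc k)) (\<lambda>w. \<Prod>i<Suc k. exp (g (w!i)))"
proof -
  let ?p = "walk_pmf n a d (Suc k)"
  have "measure_pmf.prob ?p {w. (\<Sum>i<Suc k. g (w!i)) \<ge> c}
     = measure_pmf.expectation ?p (indicator {w. (\<Sum>i<Suc k. g (w!i)) \<ge> c} :: nat list \<Rightarrow> real)" by simp
  also have "\<dots> \<le> measure_pmf.expectation ?p (\<lambda>w. exp (- c) * (\<Prod>i<Suc k. exp (g (w!i))))"
  proof (rule integral_mono)
    show "integrable (measure_pmf ?p) (indicator {w. (\<Sum>i<Suc k. g (w!i)) \<ge> c} :: nat list \<Rightarrow> real)"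
      by (rule integrable_measure_pmf_finite[OF walk_finite])
    show "integrable (measure_pmf ?p) (\<lambda>w. exp (- c) * (\<Prod>i<Suc k. exp (g (w!i))))"
      by (rule integrable_measure_pmf_finite[OF walk_finite])
    fix w
    have e: "exp (- c) * (\<Prod>i<Suc k. exp (g (w!i))) = exp ((\<Sum>i<Suc k. g (w!i)) - c)"
    proof -
      have "exp ((\<Sum>i<Suc k. g (w!i)) - c) = exp (\<Sum>i<Suc k. g (w!i)) * exp (- c)"
        by (simp only: diff_conv_add_uminus exp_add)
      also have "exp (\<Sum>i<Suc k. g (w!i)) = (\<Prod>i<Suc k. exp (g (w!i)))"
        by (rule exp_sum) simp
      finally show ?thesis by simp
    qed
    show "(indicator {w. (\<Sum>i<Suc k. g (w!i)) \<ge> c} w :: real) \<le> exp (- c) * (\<Prod>i<Suc k. exp (g (w!i)))"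
      unfolding e by (auto simp: indicator_def)
  qed
  also have "\<dots> = exp (- c) * measure_pmf.expectation ?p (\<lambda>w. \<Prod>i<Suc k. exp (g (w!i)))"
    by (rule integral_mult_right_zero)
  finally show ?thesis .
qed

lemma count_tail:
  assumes tail: "\<forall>x::real. x \<ge> 20 \<longrightarrow>
           measure_pmf.prob (pmf_of_set {..<n}) {v. f v \<ge> x} \<le> exp (- x * (ln x) ^ 3)"
    and j: "j \<ge> (20::nat)"
  shows "(\<Sum>v<n. indicator {v. f v \<ge> real j} v) \<le> real n * exp (- 8 * real j)"
proof -
  have "(\<Sum>v<n. indicator {v. f v \<ge> real j} v) = real (card ({..<n} \<inter> {v. f v \<ge> real j}))"
    by (simp add: indicator_def sum.If_cases)
  also have "\<dots> = real n * measure_pmf.prob (pmf_of_set {..<n}) {v. f v \<ge> real j}"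
    using n_pos by (subst measure_pmf_of_set) auto
  also have "\<dots> \<le> real n * exp (- 8 * real j)"
  proof (rule mult_left_mono)
    have "measure_pmf.prob (pmf_of_set {..<n}) {v. f v \<ge> real j} \<le> exp (- real j * (ln (real j)) ^ 3)"
      using tail j by simp
    also have "\<dots> \<le> exp (- 8 * real j)" using j by (intro tail_8) simp
    finally show "measure_pmf.prob (pmf_of_set {..<n}) {v. f v \<ge> real j} \<le> exp (- 8 * real j)" .
  qed simp
  finally show ?thesis .
qed

lemma sumsq_bound:
  assumes tail: "\<forall>x::real. x \<ge> 20 \<longrightarrow>
           measure_pmf.prob (pmf_of_set {..<n}) {v. f v \<ge> x} \<le> exp (- x * (ln x) ^ 3)"
    and l20: "real l \<ge> 20"
  shows "(\<Sum>v<n. (exp (min (f v) (real l)))^2) \<le> real n * (exp 40 + 2)"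
proof -
  define T where "T v = exp 40 + (\<Sum>j\<in>{20..l}. exp (2 * real j + 2) * indicator {v. f v \<ge> real j} v)" for v
  have sq: "(exp x)^2 = exp (2 * x)" for x :: real
    by (rule exp_double[symmetric])
  have pw: "(exp (min (f v) (real l)))^2 \<le> T v" for v
  proof (cases "f v < 20")
    case True
    have "(exp (min (f v) (real l)))^2 \<le> exp 40" unfolding sq using True by simp
    also have "\<dots> \<le> T v" unfolding T_def by (intro add_increasing2 sum_nonneg) auto
    finally show ?thesis .
  next
    case False
    define m where "m = min (f v) (real l)"
    have m20: "m \<ge> 20" unfolding m_def using False l20 by simp
    define j0 where "j0 = nat \<lfloor>m\<rfloor>"
    have fl: "real j0 \<le> m" "m < real j0 + 1" unfolding j0_def using m20
      by (simp_all add: of_nat_nat)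
    have j0: "j0 \<in> {20..l}"
    proof -
      have a1: "(20::int) \<le> \<lfloor>m\<rfloor>" using m20 by (simp add: le_floor_iff)
      have a2: "\<lfloor>m\<rfloor> \<le> int l" using m_def by (simp add: floor_le_iff)
      have "nat 20 \<le> nat \<lfloor>m\<rfloor>" using a1 by (rule nat_mono)
      moreover have "nat \<lfloor>m\<rfloor> \<le> l" using a2 by (simp add: nat_le_iff)
      ultimately show ?thesis unfolding j0_def by simp
    qed
    have ind: "indicator {v. f v \<ge> real j0} v = (1::real)"
      using fl(1) unfolding m_def by (auto simp: indicator_def)
    have "(exp (min (f v) (real l)))^2 = exp (2 * m)" unfolding sq m_def ..
    also have "\<dots> \<le> exp (2 * real j0 + 2)" using fl by simp
    also have "\<dots> = exp (2 * real j0 + 2) * indicator {v. f v \<ge> real j0} v" using ind by simp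
    also have "\<dots> \<le> (\<Sum>j\<in>{20..l}. exp (2 * real j + 2) * indicator {v. f v \<ge> real j} v)"
      by (rule member_le_sum[OF j0]) auto
    also have "\<dots> \<le> T v" unfolding T_def by simp
    finally show ?thesis .
  qed
  have "(\<Sum>v<n. (exp (min (f v) (real l)))^2) \<le> (\<Sum>v<n. T v)" by (intro sum_mono pw)
  also have "(\<Sum>v<n. T v) = real n * exp 40 +
      (\<Sum>j\<in>{20..l}. exp (2 * real j + 2) * (\<Sum>v<n. indicator {v. f v \<ge> real j} v))"
  proof -
    have "(\<Sum>v<n. T v) = (\<Sum>v<n. exp 40) + (\<Sum>v<n. \<Sum>j\<in>{20..l}. exp (2 * real j + 2) * indicator {v. f v \<ge> real j} v)"
      unfolding T_def by (rule sum.distrib)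
    also have "(\<Sum>v<n. \<Sum>j\<in>{20..l}. exp (2 * real j + 2) * indicator {v. f v \<ge> real j} v)
       = (\<Sum>j\<in>{20..l}. \<Sum>v<n. exp (2 * real j + 2) * indicator {v. f v \<ge> real j} v)"
      by (rule sum.swap)
    also have "\<dots> = (\<Sum>j\<in>{20..l}. exp (2 * real j + 2) * (\<Sum>v<n. indicator {v. f v \<ge> real j} v))"
      by (simp only: sum_distrib_left)
    finally show ?thesis by simp
  qed
  also have "\<dots> \<le> real n * exp 40 + (\<Sum>j\<in>{20..l}. exp (2 * real j + 2) * (real n * exp (- 8 * real j)))"
    using count_tail[OF tail] by (intro add_left_mono sum_mono mult_left_mono) auto
  also have "(\<Sum>j\<in>{20..l}. exp (2 * real j + 2) * (real n * exp (- 8 * real j)))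
      = real n * (\<Sum>j\<in>{20..l}. exp (2 * real j + 2) * exp (- 8 * real j))"
    by (simp add: sum_distrib_left mult_ac)
  also have "real n * (\<Sum>j\<in>{20..l}. exp (2 * real j + 2) * exp (- 8 * real j)) \<le> real n * 2"
  proof (rule mult_left_mono)
    have "(\<Sum>j\<in>{20..l}. exp (2 * real j + 2) * exp (- 8 * real j)) \<le> (\<Sum>j\<in>{20..l}. (1/2::real)^j)"
      by (intro sum_mono exp_half) auto
    also have "\<dots> \<le> 2" by (rule geom_half)
    finally show "(\<Sum>j\<in>{20..l}. exp (2 * real j + 2) * exp (- 8 * real j)) \<le> 2" .
  qed simp
  finally show ?thesis by (simp add: algebra_simps)
qed

end

theorem lemma5:
  fixes n d l :: nat and a :: "nat \<Rightarrow> nat \<Rightarrow> nat" and lam :: real and f :: "nat \<Rightarrow> real"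
  assumes "n > 0"
    and "expander n a d lam"
    and "l \<ge> 1"
    and "\<forall>v<n. f v \<ge> 0"
    and "\<forall>x::real. x \<ge> 20 \<longrightarrow>
           measure_pmf.prob (pmf_of_set {..<n}) {v. f v \<ge> x} \<le> exp (- x * (ln x) ^ 3)"
    and "lam \<le> exp (- real l * (ln (real l)) ^ 3)"
  shows "measure_pmf.prob (walk_pmf n a d l)
           {w. (\<Sum>i<l. f (w ! i)) \<ge> (exp 2 + exp 3 + (exp 1 - 1)) * real l} \<le> exp (- real l)"
proof -
  note ex = assms(2)
  note tail = assms(5)
  interpret G n d a using assms(1) ex unfolding expander_def by unfold_locales auto
  define C :: real where "C = exp 2 + exp 3 + (exp 1 - 1)"
  have C24: "C \<ge> 24" unfolding C_def by (rule C_ge)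
  obtain k where lk: "l = Suc k" using assms(3) by (cases l) auto
  define lam' where "lam' = max lam 0"
  have lam0: "lam' \<ge> 0" unfolding lam'_def by simp
  have EB: "\<And>y. N (Ek 1 y) \<le> lam'^2 * N y" unfolding lam'_def by (rule E_norm_expander[OF ex])
  let ?p = "walk_pmf n a d (Suc k)"
  let ?A = "{w. (\<Sum>i<Suc k. f (w ! i)) \<ge> C * real (Suc k)}"
  have goal: "measure_pmf.prob ?p ?A \<le> exp (- real (Suc k))"
  proof (cases "Suc k < 20")
    case True
    have sub: "?A \<subseteq> {w. \<exists>i<Suc k. f (w!i) \<ge> 20}"
    proof
      fix w assume w: "w \<in> ?A"
      show "w \<in> {w. \<exists>i<Suc k. f (w!i) \<ge> 20}"
      proof (rule ccontr)
        assume "w \<notin> {w. \<exists>i<Suc k. f (w!i) \<ge> 20}"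
        then have lt: "\<forall>i<Suc k. f (w!i) < 20" by auto
        have "(\<Sum>i<Suc k. f (w ! i)) < (\<Sum>i<Suc k. 20)"
          using lt by (intro sum_strict_mono) auto
        also have "\<dots> = 20 * real (Suc k)" by simp
        also have "\<dots> \<le> C * real (Suc k)" using C24 by (intro mult_right_mono) auto
        finally show False using w by simp
      qed
    qed
    have "measure_pmf.prob ?p ?A \<le> measure_pmf.prob ?p {w. \<exists>i<Suc k. f (w!i) \<ge> 20}"
      using sub by (intro measure_pmf.finite_measure_mono) auto
    also have "\<dots> \<le> real (Suc k) * exp (- 20 * (ln 20) ^ 3)"
      using union_bound[OF tail, of 20 k] by simp
    also have "\<dots> \<le> exp (- real (Suc k))" using True by (intro small_case_num) auto
    finally show ?thesis .
  next
    case False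
    then have l20: "real (Suc k) \<ge> 20" by simp
    define g where "g v = min (f v) (real (Suc k))" for v
    define hh where "hh v = exp (g v)" for v
    define H where "H = exp (real (Suc k))"
    let ?E1 = "{w. \<exists>i<Suc k. f (w!i) \<ge> real (Suc k)}"
    let ?E2 = "{w. (\<Sum>i<Suc k. g (w!i)) \<ge> C * real (Suc k)}"
    have sub: "?A \<subseteq> ?E1 \<union> ?E2"
    proof
      fix w assume w: "w \<in> ?A"
      show "w \<in> ?E1 \<union> ?E2"
      proof (cases "w \<in> ?E1")
        case False
        then have "\<forall>i<Suc k. g (w!i) = f (w!i)" unfolding g_def by auto
        then have "(\<Sum>i<Suc k. g (w!i)) = (\<Sum>i<Suc k. f (w!i))" by simp
        then show ?thesis using w by simp
      qed simp
    qed
    have "measure_pmf.prob ?p ?A \<le> measure_pmf.prob ?p (?E1 \<union> ?E2)"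
      using sub by (intro measure_pmf.finite_measure_mono) auto
    also have "\<dots> \<le> measure_pmf.prob ?p ?E1 + measure_pmf.prob ?p ?E2"
      by (rule measure_Un_le) auto
    also have "measure_pmf.prob ?p ?E1 \<le> real (Suc k) * exp (- real (Suc k) * (ln (real (Suc k))) ^ 3)"
      by (rule union_bound[OF tail l20])
    also have "measure_pmf.prob ?p ?E2 \<le> exp (- (C * real (Suc k))) *
        measure_pmf.expectation ?p (\<lambda>w. \<Prod>i<Suc k. exp (g (w!i)))"
      by (rule markov)
    also have "measure_pmf.expectation ?p (\<lambda>w. \<Prod>i<Suc k. exp (g (w!i)))
        \<le> (L hh / sqrt (real n) + H * lam') ^ Suc k"
    proof -
      have Hb: "\<forall>v<n. \<bar>hh v\<bar> \<le> H" unfolding hh_def H_def g_def by auto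
      show ?thesis using exp_prod_bound[OF lam0 EB Hb, of k] unfolding hh_def by simp
    qed
    also have "exp (- (C * real (Suc k))) * (L hh / sqrt (real n) + H * lam') ^ Suc k \<le> exp (- 3 * real (Suc k))"
    proof -
      have sn: "sqrt (real n) > 0" using n_pos by simp
      have r1: "L hh / sqrt (real n) \<le> exp 20 + 1"
      proof -
        have "L hh / sqrt (real n) = sqrt ((\<Sum>v<n. (hh v)^2) / real n)"
          unfolding L_def L2_set_def by (simp add: real_sqrt_divide)
        also have "\<dots> \<le> sqrt (exp 40 + 2)"
          using sumsq_bound[OF tail l20] n_pos unfolding hh_def g_def
          by (intro real_sqrt_le_mono) (simp add: divide_le_eq mult.commute)
        also have "\<dots> \<le> sqrt ((exp 20 + 1)^2)"
        proof (rule real_sqrt_le_mono)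
          have "exp (40::real) = (exp 20)^2" using exp_double[of "20::real"] by simp
          then show "exp 40 + 2 \<le> (exp 20 + 1::real)^2"
            using exp_ge_add_one_self[of "20::real"] by (simp add: power2_eq_square algebra_simps)
        qed
        also have "\<dots> = exp 20 + 1" by simp
        finally show ?thesis .
      qed
      have r2: "H * lam' \<le> 1"
      proof -
        have "lam' \<le> exp (- real (Suc k) * (ln (real (Suc k))) ^ 3)"
          using assms(6) lk unfolding lam'_def by simp
        then have "H * lam' \<le> exp (real (Suc k)) * exp (- real (Suc k) * (ln (real (Suc k))) ^ 3)"
          unfolding H_def by (intro mult_left_mono) auto
        also have "\<dots> = exp (real (Suc k) - real (Suc k) * (ln (real (Suc k))) ^ 3)"
          by (simp add: exp_add[symmetric] algebra_simps)
        also have "\<dots> \<le> 1"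
        proof -
          have "(ln (real (Suc k))) ^ 3 \<ge> 1" using ln_cube_ge8[OF l20] by simp
          then have "real (Suc k) \<le> real (Suc k) * (ln (real (Suc k))) ^ 3"
            by (metis mult.right_neutral mult_left_mono of_nat_0_le_iff)
          then show ?thesis by simp
        qed
        finally show ?thesis .
      qed
      have rr: "L hh / sqrt (real n) + H * lam' \<le> exp 20 + 2" using r1 r2 by simp
      have r0: "0 \<le> L hh / sqrt (real n) + H * lam'"
        using lam0 sn L_nonneg[of hh] unfolding H_def by simp
      show ?thesis using rho_num[OF C24 rr r0, of "Suc k"] by simp
    qed
    also have "real (Suc k) * exp (- real (Suc k) * (ln (real (Suc k))) ^ 3) + exp (- 3 * real (Suc k))
        \<le> exp (- real (Suc k))" by (rule large_case_num[OF l20])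
    finally show ?thesis by simp
  qed
  then show ?thesis unfolding lk C_def by simp
qed

end
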